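(* Let $P\ge4$, $S\ge2$, $\varepsilon\ge0$, and let $R$ be a positive integer. Suppose that for every prime $p\in(P/2,P]$, $S_p$ is a multiset of integers in $(-p/2,p/2)$ with $|S_p|=S$ and $|f_{S_p}|\le\varepsilon$ (computed modulo $p$). Suppose $q$ is a prime with $q>P$. Then the multiset $$T=\{r+s^{(p)}(p^{-1})_q:\ 1\le r\le R,\ p \text{ prime},\ P/2<p\le P,\ s^{(p)}\in S_p\}$$ of residues modulo $q$ satisfies $$|f_T|\le\varepsilon+\frac{2/\sqrt3}{R}+\frac{\log(q/3)}{V\log(P/2)},$$ where $V$ is the number of primes in $(P/2,P]$.
   Context: $(a^{-1})_q$ denotes the inverse of $a$ modulo $q$. For a multiset $S$ of residues modulo $N$, $f_S(k)=\sum_{s\in S}e^{2\pi iks/N}$ (with multiplicity) and $|f_S|=\frac1{|S|}\max_{1\le k\le N-1}|f_S(k)|$. *)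

theory Defs
  imports "HOL-Analysis.Analysis" "HOL-Library.Multiset" "HOL-Number_Theory.Number_Theory"
begin

definition expsum :: "int \<Rightarrow> int multiset \<Rightarrow> int \<Rightarrow> complex" where
  "expsum N S k = sum_mset (image_mset (\<lambda>s. cis (2 * pi * of_int k * of_int s / of_int N)) S)"

definition normf :: "int \<Rightarrow> int multiset \<Rightarrow> real" where
  "normf N S = Max ((\<lambda>k. cmod (expsum N S k)) ` {1..N-1}) / real (size S)"

definition primes_in :: "real \<Rightarrow> int set" where
  "primes_in P = {p::int. prime p \<and> P / 2 < of_int p \<and> of_int p \<le> P}"

end

theory Submission
  imports Defs
begin
lemma cis_period: "cis (x + 2*pi* of_int n) = cis x"
proof -
  have "cis (2*pi* of_int n) = 1" by (simp add: complex_eq_iff cos_int_2pin sin_int_2pin)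
  then show ?thesis by (metis cis_mult mult.right_neutral)
qed

lemma cis_cong:
  assumes "[a = a'] (mod N)" "N \<noteq> 0"
  shows "cis (2*pi* of_int a* of_int b/of_int N) = cis (2*pi* of_int a'* of_int b/of_int N)"
proof -
  obtain t where t: "a = a' + N * t"
    using assms(1) by (metis cong_iff_lin cong_sym)
  have "2*pi* of_int a* of_int b/of_int N = 2*pi* of_int a'* of_int b/of_int N + 2*pi* of_int (t*b)"
    using assms(2) by (simp add: t field_simps)
  then show ?thesis by (metis cis_period of_int_mult)
qed

lemma cis_mod:
  assumes "N \<noteq> 0"
  shows "cis (2*pi* of_int k* of_int (x mod N)/of_int N) = cis (2*pi* of_int k* of_int x/of_int N)"
proof -
  have "cis (2*pi* of_int k* of_int (x mod N)/of_int N) = cis (2*pi* of_int (x mod N)* of_int k/of_int N)"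
    by (simp add: mult_ac)
  also have "\<dots> = cis (2*pi* of_int x* of_int k/of_int N)"
    by (rule cis_cong) (use assms in \<open>auto simp: cong_def\<close>)
  finally show ?thesis by (simp add: mult_ac)
qed

lemma expsum_add: "expsum N (A + B) k = expsum N A k + expsum N B k"
  by (simp add: expsum_def)

lemma expsum_sum: "expsum N (sum F X) k = (\<Sum>x\<in>X. expsum N (F x) k)"
  by (induct X rule: infinite_finite_induct) (auto simp: expsum_add expsum_def)

lemma norm_summset_le:
  assumes "\<And>x. x \<in># A \<Longrightarrow> norm (f x :: complex) \<le> B"
  shows "norm (sum_mset (image_mset f A)) \<le> real (size A) * B"
  using assms
proof (induct A)
  case empty then show ?case by simp
next
  case (add x A)
  have "norm (sum_mset (image_mset f (add_mset x A))) \<le> norm (f x) + norm (sum_mset (image_mset f A))"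
    by (simp add: norm_triangle_ineq)
  also have "\<dots> \<le> B + real (size A) * B" using add by (intro add_mono) auto
  finally show ?case by (simp add: algebra_simps)
qed

lemma summset_mult: "sum_mset (image_mset (\<lambda>x. c * f x) A) = (c::complex) * sum_mset (image_mset f A)"
  by (induct A) (simp_all add: algebra_simps)

lemma summset_diff: "sum_mset (image_mset f A) - sum_mset (image_mset g A) = sum_mset (image_mset (\<lambda>x. f x - g x) A :: complex multiset)"
  by (induct A) (simp_all add: algebra_simps)

lemma norm_cis_minus_one: "cmod (cis a - 1) = 2 * \<bar>sin (a/2)\<bar>"
proof -
  define b where "b = a/2"
  have a: "a = 2*b" by (simp add: b_def)
  have "(cmod (cis a - 1))^2 = (cos a - 1)^2 + (sin a)^2"
    by (simp add: cmod_def)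
  also have "\<dots> = (2 * \<bar>sin b\<bar>)^2"
  proof -
    have c: "cos a - 1 = - 2 * (sin b)^2" unfolding a by (simp add: cos_double_sin)
    have s: "sin a = 2 * sin b * cos b" unfolding a by (simp add: sin_double)
    have "(cos a - 1)^2 + (sin a)^2 = 4 * (sin b)^2 * ((sin b)^2 + (cos b)^2)"
    proof -
      have "\<And>x y::real. (- 2 * x^2)^2 + (2*x*y)^2 = 4*x^2*(x^2+y^2)"
        by (simp add: power2_eq_square algebra_simps)
      then show ?thesis unfolding c s by blast
    qed
    also have "\<dots> = 4 * (sin b)^2" by simp
    also have "\<dots> = (2 * \<bar>sin b\<bar>)^2" by (simp add: power_mult_distrib)
    finally show ?thesis .
  qed
  finally show ?thesis unfolding b_def
    by (metis abs_of_nonneg norm_ge_zero power2_eq_imp_eq abs_ge_zero mult_nonneg_nonneg zero_le_numeral)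
qed

lemma geom:
  "(cis a - 1) * (\<Sum>r\<in>{1..int n}. cis (of_int r * a)) = cis ((of_nat n + 1) * a) - cis a"
proof (induct n)
  case 0 then show ?case by simp
next
  case (Suc n)
  have e: "{1..int (Suc n)} = insert (int n + 1) {1..int n}" by auto
  have "(cis a - 1) * (\<Sum>r\<in>{1..int (Suc n)}. cis (of_int r * a))
      = (cis a - 1) * cis ((of_nat n + 1) * a) + (cis a - 1) * (\<Sum>r\<in>{1..int n}. cis (of_int r * a))"
    unfolding e by (simp add: distrib_left)
  also have "\<dots> = cis (a + (of_nat n + 1) * a) - cis a"
    using Suc by (simp add: algebra_simps cis_mult)
  finally show ?case by (simp add: algebra_simps)
qed

lemma G_bound:
  assumes "R \<ge> 0"
  shows "cmod (\<Sum>r\<in>{1..R}. cis (of_int r * a)) * \<bar>sin (a/2)\<bar> \<le> 1"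
proof -
  obtain n where n: "R = int n" using assms nonneg_int_cases by blast
  have "cmod (cis a - 1) * cmod (\<Sum>r\<in>{1..R}. cis (of_int r * a)) = cmod (cis ((of_nat n + 1) * a) - cis a)"
    using geom[of a n] by (metis n norm_mult)
  also have "\<dots> \<le> 2" using norm_triangle_ineq4[of "cis ((of_nat n + 1) * a)" "cis a"] by simp
  finally show ?thesis by (simp add: norm_cis_minus_one mult_ac)
qed

lemma G_le:
  assumes "R \<ge> 0"
  shows "cmod (\<Sum>r\<in>{1..R}. cis (f r)) \<le> of_int R"
proof -
  have "cmod (\<Sum>r\<in>{1..R}. cis (f r)) \<le> (\<Sum>r\<in>{1..R}. cmod (cis (f r)))" by (rule norm_sum)
  also have "\<dots> = of_int R" using assms by simp
  finally show ?thesis .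
qed

lemma prod_primes_dvd:
  fixes D :: "int set"
  assumes "finite D" "\<And>p. p \<in> D \<Longrightarrow> prime p" "\<And>p. p \<in> D \<Longrightarrow> p dvd n"
  shows "prod id D dvd n"
  using assms
proof (induct D rule: finite_induct)
  case empty then show ?case by simp
next
  case (insert x F)
  have "coprime x (prod id F)"
  proof (rule prod_coprime_right)
    fix i assume "i \<in> F"
    then show "coprime x (id i)" using insert by (auto intro!: primes_coprime)
  qed
  then show ?case using insert by (simp add: divides_mult)
qed

lemma sin_abs_le:
  fixes z c :: real
  assumes "\<bar>z\<bar> \<le> c" "c \<le> pi/2"
  shows "\<bar>sin z\<bar> \<le> sin c"
proof (cases "z \<ge> 0")
  case True
  then have "sin z \<ge> 0" using assms by (intro sin_ge_zero) auto
  moreover have "sin z \<le> sin c" using assms True by (intro sin_monotone_2pi_le) auto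
  ultimately show ?thesis by simp
next
  case False
  then have "sin (-z) \<ge> 0" using assms by (intro sin_ge_zero) auto
  moreover have "sin (-z) \<le> sin c" using assms False by (intro sin_monotone_2pi_le) auto
  ultimately show ?thesis by simp
qed

lemma elem_bound:
  fixes p q k0 m s :: int
  assumes pos: "p > 0" "q > 0" and pm: "p * k0 * u = k0 + q * m"
    and s: "- (of_int p / 2) < real_of_int s" "real_of_int s < of_int p / 2"
    and kq: "\<bar>k0\<bar> \<le> q"
  shows "cmod (cis (2 * pi * of_int k0 * of_int (s * u) / of_int q) - cis (2 * pi * of_int m * of_int s / of_int p))
     \<le> 2 * sin (pi * \<bar>of_int k0\<bar> / (2 * of_int q))"
proof -
  define x where "x = 2 * pi * of_int m * of_int s / of_int p"
  define y where "y = 2 * pi * of_int s * of_int k0 / (of_int p * of_int q)"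
  have pmr: "real_of_int p * of_int k0 * of_int u = of_int k0 + of_int q * of_int m"
    using arg_cong[OF pm, of real_of_int] by simp
  have "2 * pi * of_int k0 * of_int (s * u) / of_int q
      = 2 * pi * of_int s * (real_of_int p * of_int k0 * of_int u) / (of_int p * of_int q)"
    using pos by (simp add: field_simps)
  also have "\<dots> = x + y" unfolding pmr x_def y_def using pos by (simp add: field_simps)
  finally have e: "2 * pi * of_int k0 * of_int (s * u) / of_int q = x + y" .
  have "cmod (cis (x + y) - cis x) = cmod (cis x * (cis y - 1))"
    by (simp add: cis_mult[symmetric] algebra_simps)
  also have "\<dots> = 2 * \<bar>sin (y/2)\<bar>" by (simp add: norm_mult norm_cis_minus_one)
  also have "\<dots> \<le> 2 * sin (pi * \<bar>of_int k0\<bar> / (2 * of_int q))"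
  proof -
    have y2: "y/2 = pi * (of_int s / of_int p) * (of_int k0 / of_int q)"
      unfolding y_def using pos by (simp add: field_simps)
    have sa: "\<bar>real_of_int s\<bar> \<le> of_int p / 2" using s by linarith
    have pp: "real_of_int p > 0" using pos by simp
    have qq: "real_of_int q > 0" using pos by simp
    have "\<bar>of_int s / of_int p\<bar> = \<bar>real_of_int s\<bar> / of_int p" using pp by (simp add: abs_divide)
    also have "\<dots> \<le> (of_int p / 2) / of_int p" using sa pp by (intro divide_right_mono) auto
    also have "\<dots> = 1/2" using pp by simp
    finally have "\<bar>of_int s / of_int p\<bar> \<le> (1/2::real)" .
    moreover have "\<bar>of_int k0 / of_int q\<bar> \<le> (1::real)"
    proof -
      have "\<bar>of_int k0 / of_int q\<bar> = \<bar>real_of_int k0\<bar> / of_int q" using qq by (simp add: abs_divide)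
      also have "\<dots> \<le> 1" using kq qq by (simp add: divide_le_eq)
      finally show ?thesis .
    qed
    moreover have "\<bar>y/2\<bar> = pi * \<bar>of_int s / of_int p\<bar> * \<bar>of_int k0 / of_int q\<bar>"
      unfolding y2 by (simp only: abs_mult abs_of_pos[OF pi_gt_zero])
    ultimately have "\<bar>y/2\<bar> \<le> pi * (1/2) * \<bar>of_int k0 / of_int q\<bar>"
    proof -
      assume h: "\<bar>of_int s / of_int p\<bar> \<le> (1/2::real)" "\<bar>y/2\<bar> = pi * \<bar>of_int s / of_int p\<bar> * \<bar>of_int k0 / of_int q\<bar>"
      have "pi * \<bar>of_int s / of_int p\<bar> \<le> pi * (1/2)" using h(1) by (intro mult_left_mono) auto
      then have "pi * \<bar>of_int s / of_int p\<bar> * \<bar>of_int k0 / of_int q\<bar> \<le> pi * (1/2) * \<bar>of_int k0 / of_int q\<bar>"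
        by (intro mult_right_mono) auto
      then show ?thesis using h(2) by simp
    qed
    also have "\<dots> = pi * \<bar>of_int k0\<bar> / (2 * of_int q)" using qq by (simp add: abs_divide)
    finally have a1: "\<bar>y/2\<bar> \<le> pi * \<bar>of_int k0\<bar> / (2 * of_int q)" .
    have kq1: "\<bar>real_of_int k0\<bar> / of_int q \<le> 1" using kq qq by (simp add: divide_le_eq)
    have "pi * \<bar>of_int k0\<bar> / (2 * of_int q) = (pi/2) * (\<bar>real_of_int k0\<bar> / of_int q)" by simp
    also have "\<dots> \<le> (pi/2) * 1" using kq1 by (intro mult_left_mono) auto
    finally have "pi * \<bar>of_int k0\<bar> / (2 * of_int q) \<le> pi / 2" by simp
    then show ?thesis using sin_abs_le[OF a1] by simp
  qed
  finally show ?thesis unfolding e x_def .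
qed

lemma Hp_bound:
  fixes p q k0 :: int and A :: "int multiset" and \<epsilon> :: real
  assumes pp: "prime p" and qp: "prime q" and pq: "p < q"
    and ndvd: "\<not> p dvd k0" and kq: "\<bar>k0\<bar> \<le> q"
    and s: "\<And>s. s \<in># A \<Longrightarrow> - (of_int p / 2) < real_of_int s \<and> real_of_int s < of_int p / 2"
    and nf: "normf p A \<le> \<epsilon>" and sz: "size A > 0"
  shows "cmod (expsum q (image_mset (\<lambda>s. s * modular_inverse q p) A) k0)
     \<le> \<epsilon> * real (size A) + real (size A) * (2 * sin (pi * \<bar>of_int k0\<bar> / (2 * of_int q)))"
proof -
  define u where "u = modular_inverse q p"
  have p0: "p > 0" "q > 0" using pp qp prime_gt_0_int by auto
  have cop: "coprime p q" using pp qp pq by (intro primes_coprime) auto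
  have "[p * u = 1] (mod q)" unfolding u_def by (rule cong_modular_inverse1[OF cop])
  then have "q dvd p * u - 1" by (simp add: cong_iff_dvd_diff)
  then obtain w where w: "p * u - 1 = q * w" by (auto simp: dvd_def)
  define m where "m = k0 * w"
  have pm: "p * k0 * u = k0 + q * m"
  proof -
    have "p * k0 * u = k0 * (p * u - 1) + k0" by (simp add: algebra_simps)
    then show ?thesis unfolding m_def w by (simp add: algebra_simps)
  qed
  define m' where "m' = m mod p"
  have m'1: "m' \<in> {1..p-1}"
  proof -
    have "m' \<ge> 0" "m' < p" using p0 unfolding m'_def by auto
    moreover have "m' \<noteq> 0"
    proof
      assume "m' = 0"
      then have "p dvd m" unfolding m'_def by auto
      then have "p dvd p * k0 * u - q * m" by simp
      then show False using pm ndvd by simp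
    qed
    ultimately show ?thesis by auto
  qed
  define E where "E = expsum p A m'"
  have fin: "finite ((\<lambda>k. cmod (expsum p A k)) ` {1..p-1})" by simp
  have "cmod E \<le> Max ((\<lambda>k. cmod (expsum p A k)) ` {1..p-1})"
    unfolding E_def by (rule Max_ge[OF fin]) (use m'1 in auto)
  also have "\<dots> \<le> \<epsilon> * real (size A)"
    using nf sz unfolding normf_def by (simp add: divide_le_eq)
  finally have E1: "cmod E \<le> \<epsilon> * real (size A)" .
  have E2: "E = sum_mset (image_mset (\<lambda>s. cis (2 * pi * of_int m * of_int s / of_int p)) A)"
  proof -
    have "\<And>s. cis (2 * pi * of_int m' * of_int s / of_int p) = cis (2 * pi * of_int m * of_int s / of_int p)"
      using p0 unfolding m'_def by (intro cis_cong) (auto simp: cong_def)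
    then show ?thesis unfolding E_def expsum_def by simp
  qed
  have "expsum q (image_mset (\<lambda>s. s * u) A) k0 - E
     = sum_mset (image_mset (\<lambda>s. cis (2 * pi * of_int k0 * of_int (s * u) / of_int q) - cis (2 * pi * of_int m * of_int s / of_int p)) A)"
    unfolding E2 expsum_def by (simp add: summset_diff multiset.map_comp comp_def)
  also have "cmod \<dots> \<le> real (size A) * (2 * sin (pi * \<bar>of_int k0\<bar> / (2 * of_int q)))"
    using s by (intro norm_summset_le elem_bound[OF p0 pm _ _ kq]) auto
  finally have "cmod (expsum q (image_mset (\<lambda>s. s * u) A) k0 - E) \<le> real (size A) * (2 * sin (pi * \<bar>of_int k0\<bar> / (2 * of_int q)))" .
  then have "cmod (expsum q (image_mset (\<lambda>s. s * u) A) k0) \<le> cmod E + real (size A) * (2 * sin (pi * \<bar>of_int k0\<bar> / (2 * of_int q)))"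
    using norm_triangle_ineq2[of "expsum q (image_mset (\<lambda>s. s * u) A) k0" E] by linarith
  with E1 show ?thesis unfolding u_def by linarith
qed

lemma expsum_cong:
  assumes "[k = k'] (mod N)" "N \<noteq> 0"
  shows "expsum N A k = expsum N A k'"
  unfolding expsum_def using cis_cong[OF assms] by simp

lemma inner:
  assumes "q \<noteq> 0"
  shows "expsum q (image_mset (\<lambda>s. (r + s * u) mod q) A) k
       = cis (2 * pi * of_int k * of_int r / of_int q) * expsum q (image_mset (\<lambda>s. s * u) A) k"
proof -
  have e: "cis (2 * pi * of_int k * of_int ((r + s * u) mod q) / of_int q)
       = cis (2 * pi * of_int k * of_int r / of_int q) * cis (2 * pi * of_int k * of_int (s * u) / of_int q)" for s
  proof -
    have "cis (2 * pi * of_int k * of_int ((r + s * u) mod q) / of_int q)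
        = cis (2 * pi * of_int k * of_int (r + s * u) / of_int q)" by (rule cis_mod[OF assms])
    also have "2 * pi * of_int k * of_int (r + s * u) / of_int q
        = 2 * pi * of_int k * of_int r / of_int q + 2 * pi * of_int k * of_int (s * u) / of_int q"
      by (simp add: distrib_left add_divide_distrib)
    finally show ?thesis by (simp add: cis_mult)
  qed
  show ?thesis unfolding expsum_def by (simp add: multiset.map_comp comp_def e summset_mult)
qed

lemma sin_lower_A:
  fixes x :: real
  assumes "pi/3 \<le> x" "x \<le> 2*pi/3"
  shows "sqrt 3 / 2 \<le> sin x"
proof (cases "x \<le> pi/2")
  case True
  then have "sin (pi/3) \<le> sin x" using assms by (intro sin_monotone_2pi_le) auto
  then show ?thesis by (simp add: sin_60)
next
  case False
  have "sin (pi/3) \<le> sin (pi - x)" using assms False by (intro sin_monotone_2pi_le) auto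
  then show ?thesis by (simp add: sin_60)
qed

lemma card_bound:
  fixes D :: "int set" and k0 :: int and P q :: real
  assumes "finite D" "\<And>p. p \<in> D \<Longrightarrow> prime p" "\<And>p. p \<in> D \<Longrightarrow> p dvd k0"
    "\<And>p. p \<in> D \<Longrightarrow> P / 2 < of_int p" "P \<ge> 4" "k0 \<noteq> 0" "3 * \<bar>of_int k0\<bar> < q"
  shows "real (card D) \<le> ln (q / 3) / ln (P / 2)"
proof -
  have "prod id D dvd k0" by (rule prod_primes_dvd) (use assms in auto)
  then have "\<bar>prod id D\<bar> \<le> \<bar>k0\<bar>" using assms(6) by (rule dvd_imp_le_int[rotated])
  then have pr: "real_of_int (prod id D) \<le> \<bar>of_int k0\<bar>" by linarith
  have "(P/2) ^ card D = (\<Prod>p\<in>D. P/2)" by simp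
  also have "\<dots> \<le> (\<Prod>p\<in>D. real_of_int p)"
    using assms(4,5) by (intro prod_mono) force
  also have "\<dots> = real_of_int (prod id D)" by simp
  finally have "(P/2) ^ card D \<le> q / 3" using pr assms(7) by linarith
  moreover have "(P/2) ^ card D > 0" using assms(5) by simp
  ultimately have "ln ((P/2) ^ card D) \<le> ln (q/3)" by simp
  then have "real (card D) * ln (P/2) \<le> ln (q/3)" using assms(5) by (simp add: ln_realpow)
  moreover have "ln (P/2) > 0" using assms(5) by simp
  ultimately show ?thesis by (simp add: le_divide_eq)
qed

theorem lemma12:
  fixes P \<epsilon> :: real and S :: nat and R q :: int and Sp :: "int \<Rightarrow> int multiset"
  assumes "P \<ge> 4" and "S \<ge> 2" and "\<epsilon> \<ge> 0" and "R > 0"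
    and "\<And>p. p \<in> primes_in P \<Longrightarrow> size (Sp p) = S"
    and "\<And>p s. p \<in> primes_in P \<Longrightarrow> s \<in># Sp p \<Longrightarrow> - (of_int p / 2) < real_of_int s \<and> real_of_int s < of_int p / 2"
    and "\<And>p. p \<in> primes_in P \<Longrightarrow> normf p (Sp p) \<le> \<epsilon>"
    and "prime q" and "of_int q > P"
  shows "normf q (\<Sum>p\<in>primes_in P. \<Sum>r\<in>{1..R}.
            image_mset (\<lambda>s. (r + s * modular_inverse q p) mod q) (Sp p))
         \<le> \<epsilon> + (2 / sqrt 3) / of_int R
           + ln (of_int q / 3) / (real (card (primes_in P)) * ln (P / 2))"
proof -
  note P4 = assms(1) and S2 = assms(2) and e0 = assms(3) and R0 = assms(4)
    and sizeS = assms(5) and sbd = assms(6) and nf = assms(7) and qp = assms(8) and qP = assms(9)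
  define X where "X = primes_in P"
  define V where "V = card X"
  define T where "T = (\<Sum>p\<in>X. \<Sum>r\<in>{1..R}. image_mset (\<lambda>s. (r + s * modular_inverse q p) mod q) (Sp p))"
  define Lq where "Lq = ln (of_int q / 3 :: real)"
  define LP where "LP = ln (P / 2)"
  define B where "B = \<epsilon> + (2 / sqrt 3) / of_int R + Lq / (real V * LP)"
  have q0: "q > 0" using qp prime_gt_0_int by auto
  have Lq0: "Lq \<ge> 0" unfolding Lq_def using qP P4 by simp
  have LP0: "LP > 0" unfolding LP_def using P4 by simp
  have finX: "finite X"
  proof (rule finite_subset)
    show "X \<subseteq> {0..\<lfloor>P\<rfloor>}" unfolding X_def primes_in_def
      using prime_gt_0_int by (auto intro: le_floor_iff[THEN iffD2] less_imp_le)
  qed simp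
  have XP: "p \<in> X \<Longrightarrow> prime p \<and> P / 2 < of_int p \<and> of_int p \<le> P" for p
    unfolding X_def primes_in_def by auto
  have sizeT: "size T = V * nat R * S"
  proof -
    have "size T = (\<Sum>p\<in>X. \<Sum>r\<in>{1..R}. size (Sp p))" unfolding T_def by (simp add: size_multiset_sum)
    also have "\<dots> = (\<Sum>p\<in>X. \<Sum>r\<in>{1..R}. S)" using sizeS unfolding X_def by simp
    also have "\<dots> = V * nat R * S" unfolding V_def by simp
    finally show ?thesis .
  qed
  show ?thesis
  proof (cases "X = {}")
    case True
    then have "T = {#}" unfolding T_def by simp
    then have "normf q T = 0" unfolding normf_def by simp
    moreover have "B \<ge> 0" unfolding B_def using e0 R0 True V_def by simp
    ultimately show ?thesis unfolding B_def T_def X_def V_def Lq_def LP_def by simp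
  next
    case False
    then have V0: "V > 0" unfolding V_def using finX by (simp add: card_gt_0_iff)
    have kb: "cmod (expsum q T k) \<le> B * real (size T)" if k: "k \<in> {1..q-1}" for k
    proof -
      define u where "u p = modular_inverse q p" for p
      define G where "G = (\<Sum>r\<in>{1..R}. cis (2 * pi * of_int k * of_int r / of_int q))"
      define H where "H p = expsum q (image_mset (\<lambda>s. s * u p) (Sp p)) k" for p
      have eT: "expsum q T k = G * (\<Sum>p\<in>X. H p)"
      proof -
        have "expsum q T k = (\<Sum>p\<in>X. \<Sum>r\<in>{1..R}. cis (2 * pi * of_int k * of_int r / of_int q) * H p)"
          unfolding T_def expsum_sum H_def u_def using q0 by (simp add: inner)
        also have "\<dots> = (\<Sum>p\<in>X. G * H p)" unfolding G_def by (simp add: sum_distrib_right)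
        finally show ?thesis by (simp add: sum_distrib_left)
      qed
      have Gle: "cmod G \<le> of_int R" unfolding G_def using R0 by (intro G_le) auto
      have Hle: "cmod (H p) \<le> real S" if "p \<in> X" for p
      proof -
        have "cmod (H p) \<le> real (size (image_mset (\<lambda>s. s * u p) (Sp p))) * 1" unfolding H_def expsum_def
          by (intro norm_summset_le) auto
        then show ?thesis using sizeS that unfolding X_def by simp
      qed
      have sumH: "(\<Sum>p\<in>X. cmod (H p)) \<le> real V * real S"
        using sum_mono[of X "\<lambda>p. cmod (H p)" "\<lambda>p. real S", OF Hle] unfolding V_def by simp
      have nGH: "cmod (expsum q T k) \<le> cmod G * (\<Sum>p\<in>X. cmod (H p))"
        unfolding eT norm_mult by (intro mult_left_mono norm_sum) auto
      have BT: "B * real (size T) = \<epsilon> * (real V * of_int R * real S) + (2 / sqrt 3) * (real V * real S)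
                + real S * of_int R * (Lq / LP)"
        unfolding B_def sizeT using V0 R0 LP0 by (simp add: field_simps)
      have Gsin: "cmod G * \<bar>sin (pi * of_int k' / of_int q)\<bar> \<le> 1" if kk: "[k = k'] (mod q)" for k'
      proof -
        have "G = (\<Sum>r\<in>{1..R}. cis (of_int r * (2 * pi * of_int k' / of_int q)))"
          unfolding G_def
        proof (intro sum.cong refl)
          fix r
          have "cis (2 * pi * of_int k * of_int r / of_int q) = cis (2 * pi * of_int k' * of_int r / of_int q)"
            using kk q0 by (intro cis_cong) auto
          then show "cis (2 * pi * of_int k * of_int r / of_int q) = cis (of_int r * (2 * pi * of_int k' / of_int q))"
            by (simp add: mult_ac)
        qed
        then show ?thesis using G_bound[of R "2 * pi * of_int k' / of_int q"] R0 by simp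
      qed
      show ?thesis
      proof (cases "q \<le> 3 * k \<and> 3 * k \<le> 2 * q")
        case True
        have "sqrt 3 / 2 \<le> sin (pi * of_int k / of_int q)"
        proof (rule sin_lower_A)
          have "real_of_int q \<le> 3 * of_int k" "3 * real_of_int k \<le> 2 * of_int q" using True by linarith+
          then show "pi / 3 \<le> pi * of_int k / of_int q" "pi * of_int k / of_int q \<le> 2 * pi / 3"
            using q0 by (simp_all add: field_simps)
        qed
        then have "cmod G * (sqrt 3 / 2) \<le> 1"
          using Gsin[of k] by (smt (verit) mult_left_mono norm_ge_zero cong_refl)
        then have G2: "cmod G \<le> 2 / sqrt 3" by (simp add: field_simps)
        have "cmod (expsum q T k) \<le> (2 / sqrt 3) * (real V * real S)"
          using nGH G2 sumH by (smt (verit) mult_mono norm_ge_zero sum_nonneg)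
        moreover have "\<epsilon> * (real V * of_int R * real S) \<ge> 0" using e0 R0 by simp
        moreover have "real S * of_int R * (Lq / LP) \<ge> 0" using Lq0 LP0 R0 by simp
        ultimately show ?thesis unfolding BT by linarith
      next
        case False
        define k0 where "k0 = (if 3 * k < q then k else k - q)"
        have k0: "k0 \<noteq> 0" "3 * \<bar>k0\<bar> < q" "[k = k0] (mod q)"
          using False k unfolding k0_def by (auto simp: cong_def)
        define \<sigma> where "\<sigma> = sin (pi * \<bar>of_int k0\<bar> / (2 * of_int q))"
        have qr: "real_of_int q > 0" using q0 by simp
        have z: "pi * \<bar>of_int k0\<bar> / of_int q \<le> pi / 3"
        proof -
          have "3 * \<bar>real_of_int k0\<bar> \<le> of_int q" using k0(2) by linarith
          then show ?thesis using qr by (simp add: field_simps)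
        qed
        have z0: "pi * \<bar>of_int k0\<bar> / of_int q \<ge> 0" using qr by simp
        have z': "pi * \<bar>of_int k0\<bar> / of_int q \<le> pi" using z pi_gt_zero by linarith
        have \<sigma>0: "\<sigma> \<ge> 0" unfolding \<sigma>_def using z' z0 by (intro sin_ge_zero) auto
        have "\<bar>sin (pi * of_int k0 / of_int q)\<bar> = sin (pi * \<bar>of_int k0\<bar> / of_int q)"
        proof (cases "k0 \<ge> 0")
          case True
          have "sin (pi * \<bar>of_int k0\<bar> / of_int q) \<ge> 0" using z' z0 by (intro sin_ge_zero) auto
          moreover have e: "pi * \<bar>of_int k0\<bar> / of_int q = pi * of_int k0 / of_int q" using True by simp
          ultimately show ?thesis by (simp only: e abs_of_nonneg)
        next
          case False
          then have e: "pi * \<bar>of_int k0\<bar> / of_int q = - (pi * of_int k0 / of_int q)" by simp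
          then have "sin (pi * \<bar>of_int k0\<bar> / of_int q) = - sin (pi * of_int k0 / of_int q)"
            by (simp only: e sin_minus)
          moreover have "sin (pi * \<bar>of_int k0\<bar> / of_int q) \<ge> 0" using z' z0 by (intro sin_ge_zero) auto
          ultimately show ?thesis by linarith
        qed
        also have "\<dots> = 2 * \<sigma> * cos (pi * \<bar>of_int k0\<bar> / (2 * of_int q))"
          unfolding \<sigma>_def using sin_double[of "pi * \<bar>of_int k0\<bar> / (2 * of_int q)"] by simp
        finally have ss: "\<bar>sin (pi * of_int k0 / of_int q)\<bar> = 2 * \<sigma> * cos (pi * \<bar>of_int k0\<bar> / (2 * of_int q))" .
        have h2: "pi * \<bar>of_int k0\<bar> / (2 * of_int q) = (pi * \<bar>of_int k0\<bar> / of_int q) / 2" by simp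
        have h3a: "pi * \<bar>of_int k0\<bar> / (2 * of_int q) \<le> pi / 6" 
        proof -
          have "\<And>a::real. a \<le> pi/3 \<Longrightarrow> a/2 \<le> pi/6" by linarith
          then have "(pi * \<bar>of_int k0\<bar> / of_int q) / 2 \<le> pi / 6" using z by blast
          then show ?thesis using h2 by simp
        qed
        have h3b: "0 \<le> pi * \<bar>of_int k0\<bar> / (2 * of_int q)" using z0 unfolding h2 by simp
        note h3 = h3a h3b
        have "cos (pi / 6) \<le> cos (pi * \<bar>of_int k0\<bar> / (2 * of_int q))"
          using h3 by (intro cos_monotone_0_pi_le) auto
        then have c: "sqrt 3 / 2 \<le> cos (pi * \<bar>of_int k0\<bar> / (2 * of_int q))" by (simp add: cos_30)
        have "cmod G * (2 * \<sigma>) * (sqrt 3 / 2) \<le> cmod G * (2 * \<sigma>) * cos (pi * \<bar>of_int k0\<bar> / (2 * of_int q))"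
          using c \<sigma>0 by (intro mult_left_mono) auto
        also have "\<dots> \<le> 1" using Gsin[OF k0(3)] ss by (simp add: mult_ac)
        finally have G\<sigma>: "cmod G * (2 * \<sigma>) \<le> 2 / sqrt 3" by (simp add: field_simps)
        define D where "D = {p \<in> X. p dvd k0}"
        have Hb: "cmod (H p) \<le> (if p dvd k0 then real S else 0) + (\<epsilon> * real S + real S * (2 * \<sigma>))"
          if p: "p \<in> X" for p
        proof (cases "p dvd k0")
          case True
          have "\<epsilon> * real S \<ge> 0" "real S * (2 * \<sigma>) \<ge> 0" using e0 \<sigma>0 by simp_all
          moreover have "(if p dvd k0 then real S else 0) = real S" using True by simp
          ultimately show ?thesis using Hle[OF p] by linarith
        next
          case False
          have pq: "p < q" using XP[OF p] qP by linarith
          have "cmod (H p) \<le> \<epsilon> * real (size (Sp p)) + real (size (Sp p)) * (2 * \<sigma>)"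
            unfolding H_def u_def \<sigma>_def expsum_cong[OF k0(3) q0[THEN less_imp_neq, symmetric]]
          proof (rule Hp_bound)
            show "prime p" using XP[OF p] by simp
            show "\<bar>k0\<bar> \<le> q" using k0(2) by simp
            show "size (Sp p) > 0" using sizeS[of p] p S2 unfolding X_def by simp
          qed (use qp pq False p sbd nf in \<open>auto simp: X_def\<close>)
          then show ?thesis using False sizeS[of p] p unfolding X_def by simp
        qed
        have "(\<Sum>p\<in>X. cmod (H p)) \<le> (\<Sum>p\<in>X. (if p dvd k0 then real S else 0) + (\<epsilon> * real S + real S * (2 * \<sigma>)))"
          using Hb by (rule sum_mono)
        also have "\<dots> = real S * real (card D) + real V * (\<epsilon> * real S + real S * (2 * \<sigma>))"
          unfolding sum.distrib D_def V_def using finX by (simp add: sum.inter_filter[symmetric] distrib_left)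
        finally have sH: "(\<Sum>p\<in>X. cmod (H p)) \<le> real S * real (card D) + real V * (\<epsilon> * real S + real S * (2 * \<sigma>))" .
        have cD: "real (card D) \<le> Lq / LP" unfolding Lq_def LP_def
        proof (rule card_bound)
          show "finite D" unfolding D_def using finX by simp
        qed (use XP P4 k0 in \<open>auto simp: D_def\<close>)
        have "cmod (expsum q T k) \<le> cmod G * (real S * real (card D) + real V * (\<epsilon> * real S + real S * (2 * \<sigma>)))"
          using nGH sH by (smt (verit) mult_left_mono norm_ge_zero)
        also have "\<dots> = cmod G * (real S * real (card D)) + cmod G * (real V * \<epsilon> * real S) + (cmod G * (2 * \<sigma>)) * (real V * real S)"
          by (simp add: algebra_simps)
        also have "\<dots> \<le> of_int R * (real S * (Lq / LP)) + of_int R * (real V * \<epsilon> * real S) + (2 / sqrt 3) * (real V * real S)"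
        proof (intro add_mono)
          have "cmod G * (real S * real (card D)) \<le> of_int R * (real S * real (card D))"
            using Gle by (intro mult_right_mono) auto
          also have "\<dots> \<le> of_int R * (real S * (Lq / LP))"
            using cD R0 by (intro mult_left_mono) auto
          finally show "cmod G * (real S * real (card D)) \<le> of_int R * (real S * (Lq / LP))" .
          show "cmod G * (real V * \<epsilon> * real S) \<le> of_int R * (real V * \<epsilon> * real S)"
            using Gle e0 by (intro mult_right_mono) auto
          show "cmod G * (2 * \<sigma>) * (real V * real S) \<le> 2 / sqrt 3 * (real V * real S)"
            using G\<sigma> by (intro mult_right_mono) auto
        qed
        also have "\<dots> = B * real (size T)" unfolding BT by (simp add: algebra_simps)
        finally show ?thesis .
      qed
    qed
    have "Max ((\<lambda>k. cmod (expsum q T k)) ` {1..q-1}) \<le> B * real (size T)"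
      using kb q0 qP P4 by (intro Max.boundedI) auto
    moreover have "real (size T) > 0" using sizeT V0 R0 S2 by simp
    ultimately have "normf q T \<le> B" unfolding normf_def by (simp add: divide_le_eq)
    then show ?thesis unfolding B_def T_def X_def V_def Lq_def LP_def .
  qed
qed

end
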